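(* Let $\sigma$ be a prime 2-structure and let $X\subsetneq V(\sigma)$ be such that $\sigma[X]$ is prime; write $\overline{X}=V(\sigma)\setminus X$. Suppose that $q^a_{(\sigma,\overline{X})}\neq\emptyset$. If $\overline{X}$ is finite and $|\overline{X}|\geq 4$, then there exist distinct $v,w\in\overline{X}$ such that $\sigma-\{v,w\}$ is prime.
   Context: A 2-structure $\sigma$ consists of a vertex set $V(\sigma)$ and an equivalence relation $\equiv_\sigma$ on ordered pairs of distinct vertices; $E(\sigma)$ is its set of equivalence classes. $\sigma[W]$ is the induced 2-structure on $W$; $\sigma-W=\sigma[V(\sigma)\setminus W]$. A module is a set $M$ such that for all $x,y\in M$ and $v\notin M$, $(x,v)\equiv_\sigma(y,v)$ and $(v,x)\equiv_\sigma(v,y)$; $\emptyset$, $V(\sigma)$, singletons are trivial; $\sigma$ is prime if $|V(\sigma)|\geq3$ and all modules are trivial. For $X$ with $\sigma[X]$ prime: $\langle X\rangle_\sigma$ is the set of $v\in\overline{X}$ such that $X$ is a module of $\sigma[X\cup\{v\}]$; for $\alpha\in X$, $X_\sigma(\alpha)$ is the set of $v\in\overline{X}$ such that $\{\alpha,v\}$ is a module of $\sigma[X\cup\{v\}]$. For $e,f\in E(\sigma)$: $\langle X\rangle^{(e,f)}_\sigma$ is the set of $v\in\langle X\rangle_\sigma$ with $(v,\alpha)\in e$ and $(\alpha,v)\in f$ for $\alpha\in X$ (independent of $\alpha$); $X^{(e,f)}_\sigma(\alpha)$ is the set of $v\in X_\sigma(\alpha)$ with $(v,\alpha)\in e$ and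 $(\alpha,v)\in f$. $q^a_{(\sigma,\overline{X})}$ is the set of nonempty sets of the form $\langle X\rangle^{(e,f)}_\sigma$ or $X^{(e,f)}_\sigma(\alpha)$ ($\alpha\in X$) with $e\neq f$. *)

theory Defs
  imports Main
begin

type_synonym 'a two_structure = "'a set \<times> (('a \<times> 'a) \<times> ('a \<times> 'a)) set"

definition dpairs :: "'a set \<Rightarrow> ('a \<times> 'a) set" where
  "dpairs V = {(x, y). x \<in> V \<and> y \<in> V \<and> x \<noteq> y}"

definition verts :: "'a two_structure \<Rightarrow> 'a set" where
  "verts \<sigma> = fst \<sigma>"

definition eqv :: "'a two_structure \<Rightarrow> (('a \<times> 'a) \<times> ('a \<times> 'a)) set" where
  "eqv \<sigma> = snd \<sigma>"

definition is_two_structure :: "'a two_structure \<Rightarrow> bool" where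
  "is_two_structure \<sigma> \<longleftrightarrow> equiv (dpairs (verts \<sigma>)) (eqv \<sigma>)"

definition classes :: "'a two_structure \<Rightarrow> ('a \<times> 'a) set set" where
  "classes \<sigma> = dpairs (verts \<sigma>) // eqv \<sigma>"

definition induced :: "'a two_structure \<Rightarrow> 'a set \<Rightarrow> 'a two_structure" where
  "induced \<sigma> W = (W, eqv \<sigma> \<inter> (dpairs W \<times> dpairs W))"

definition remove :: "'a two_structure \<Rightarrow> 'a set \<Rightarrow> 'a two_structure" where
  "remove \<sigma> W = induced \<sigma> (verts \<sigma> - W)"

definition is_module :: "'a two_structure \<Rightarrow> 'a set \<Rightarrow> bool" where
  "is_module \<sigma> M \<longleftrightarrow> M \<subseteq> verts \<sigma> \<and>
     (\<forall>x\<in>M. \<forall>y\<in>M. \<forall>v\<in>verts \<sigma> - M.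
        ((x, v), (y, v)) \<in> eqv \<sigma> \<and> ((v, x), (v, y)) \<in> eqv \<sigma>)"

definition trivial_module :: "'a two_structure \<Rightarrow> 'a set \<Rightarrow> bool" where
  "trivial_module \<sigma> M \<longleftrightarrow> M = {} \<or> M = verts \<sigma> \<or> (\<exists>x. M = {x})"

definition prime_ts :: "'a two_structure \<Rightarrow> bool" where
  "prime_ts \<sigma> \<longleftrightarrow> (infinite (verts \<sigma>) \<or> 3 \<le> card (verts \<sigma>)) \<and>
     (\<forall>M. is_module \<sigma> M \<longrightarrow> trivial_module \<sigma> M)"

definition ext_set :: "'a two_structure \<Rightarrow> 'a set \<Rightarrow> 'a set" where
  "ext_set \<sigma> X = {v \<in> verts \<sigma> - X. is_module (induced \<sigma> (X \<union> {v})) X}"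

definition ext_alpha :: "'a two_structure \<Rightarrow> 'a set \<Rightarrow> 'a \<Rightarrow> 'a set" where
  "ext_alpha \<sigma> X \<alpha> = {v \<in> verts \<sigma> - X. is_module (induced \<sigma> (X \<union> {v})) {\<alpha>, v}}"

definition ext_set_ef :: "'a two_structure \<Rightarrow> 'a set \<Rightarrow> ('a \<times> 'a) set \<Rightarrow> ('a \<times> 'a) set \<Rightarrow> 'a set" where
  "ext_set_ef \<sigma> X e f = {v \<in> ext_set \<sigma> X. \<forall>\<alpha>\<in>X. (v, \<alpha>) \<in> e \<and> (\<alpha>, v) \<in> f}"

definition ext_alpha_ef :: "'a two_structure \<Rightarrow> 'a set \<Rightarrow> 'a \<Rightarrow> ('a \<times> 'a) set \<Rightarrow> ('a \<times> 'a) set \<Rightarrow> 'a set" where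
  "ext_alpha_ef \<sigma> X \<alpha> e f = {v \<in> ext_alpha \<sigma> X \<alpha>. (v, \<alpha>) \<in> e \<and> (\<alpha>, v) \<in> f}"

definition qa :: "'a two_structure \<Rightarrow> 'a set \<Rightarrow> 'a set set" where
  "qa \<sigma> X = {S. S \<noteq> {} \<and> (\<exists>e\<in>classes \<sigma>. \<exists>f\<in>classes \<sigma>. e \<noteq> f \<and>
      (S = ext_set_ef \<sigma> X e f \<or> (\<exists>\<alpha>\<in>X. S = ext_alpha_ef \<sigma> X \<alpha> e f)))}"

end

theory Submission
  imports Defs
begin

locale TS =
  fixes V :: "'a set" and E :: "(('a \<times> 'a) \<times> ('a \<times> 'a)) set"
  assumes eqv: "equiv (dpairs V) E"
begin

definition K :: "'a \<times> 'a \<Rightarrow> ('a \<times> 'a) set" where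
  "K p = E `` {p}"

definition sep :: "'a \<Rightarrow> 'a \<Rightarrow> 'a \<Rightarrow> bool" where
  "sep u a b \<longleftrightarrow> \<not> (K (u,a) = K (u,b) \<and> K (a,u) = K (b,u))"

definition md :: "'a set \<Rightarrow> 'a set \<Rightarrow> bool" where
  "md W M \<longleftrightarrow> M \<subseteq> W \<and> (\<forall>a\<in>M. \<forall>b\<in>M. \<forall>u\<in>W-M. \<not> sep u a b)"

definition big :: "'a set \<Rightarrow> bool" where
  "big W \<longleftrightarrow> infinite W \<or> 3 \<le> card W"

definition pr :: "'a set \<Rightarrow> bool" where
  "pr W \<longleftrightarrow> big W \<and> (\<forall>M. md W M \<longrightarrow> M = {} \<or> M = W \<or> (\<exists>x. M = {x}))"

lemma E_sym: "(p,q) \<in> E \<Longrightarrow> (q,p) \<in> E"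
  using eqv unfolding equiv_def by (meson symD)

lemma E_trans: "(p,q) \<in> E \<Longrightarrow> (q,r) \<in> E \<Longrightarrow> (p,r) \<in> E"
  using eqv unfolding equiv_def by (meson transD)

lemma E_t3: "(p,q) \<in> E \<Longrightarrow> (q,r) \<in> E \<Longrightarrow> (r,s) \<in> E \<Longrightarrow> (p,s) \<in> E"
  using E_trans by blast

lemma E_refl: "x \<in> V \<Longrightarrow> y \<in> V \<Longrightarrow> x \<noteq> y \<Longrightarrow> ((x,y),(x,y)) \<in> E"
  using eqv unfolding equiv_def refl_on_def dpairs_def by auto

lemma E_dom: "((a,b),(c,d)) \<in> E \<Longrightarrow> a \<in> V \<and> b \<in> V \<and> a \<noteq> b \<and> c \<in> V \<and> d \<in> V \<and> c \<noteq> d"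
  using eqv unfolding equiv_def refl_on_def dpairs_def by blast

lemma K_iff: "p \<in> dpairs V \<Longrightarrow> q \<in> dpairs V \<Longrightarrow> (p,q) \<in> E \<longleftrightarrow> K p = K q"
  unfolding K_def using eq_equiv_class_iff[OF eqv] by blast

lemma nsep_refl: "\<not> sep u a a"
  unfolding sep_def by simp

lemma nsep_sym: "\<not> sep u a b \<Longrightarrow> \<not> sep u b a"
  unfolding sep_def by simp

lemma nsep_trans: "\<not> sep u a b \<Longrightarrow> \<not> sep u b c \<Longrightarrow> \<not> sep u a c"
  unfolding sep_def by simp

lemma big_mono: "big Z \<Longrightarrow> Z \<subseteq> W \<Longrightarrow> big W"
  unfolding big_def by (meson card_mono le_trans rev_finite_subset)

lemma big_third: assumes "big W" shows "\<exists>c\<in>W. c \<noteq> a \<and> c \<noteq> b"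
proof (rule ccontr)
  assume "\<not> ?thesis"
  then have "W \<subseteq> {a,b}" by blast
  then have "finite W" "card W \<le> 2"
    using finite_subset card_mono[of "{a,b}" W] card_insert_le[of "{b}" a]
    by (auto simp: card_insert_if split: if_splits)
  then show False using assms unfolding big_def by auto
qed

lemma big_ne: "big W \<Longrightarrow> \<exists>a. a \<in> W"
  using big_third by blast

lemma pr_big: "pr W \<Longrightarrow> big W" unfolding pr_def by blast

lemma pr_triv: "pr W \<Longrightarrow> md W M \<Longrightarrow> M = {} \<or> M = W \<or> (\<exists>x. M = {x})"
  unfolding pr_def by blast

lemma not_pr: "md W M \<Longrightarrow> a \<in> M \<Longrightarrow> b \<in> M \<Longrightarrow> a \<noteq> b \<Longrightarrow> c \<in> W \<Longrightarrow> c \<notin> M \<Longrightarrow> \<not> pr W"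
  unfolding pr_def by blast

lemma prI: "big W \<Longrightarrow> (\<And>M. md W M \<Longrightarrow> M = {} \<or> M = W \<or> (\<exists>x. M = {x})) \<Longrightarrow> pr W"
  unfolding pr_def by blast

lemma md_restrict: "md W M \<Longrightarrow> W' \<subseteq> W \<Longrightarrow> md W' (M \<inter> W')"
  unfolding md_def by blast

lemma mdI: "M \<subseteq> W \<Longrightarrow> (\<And>a b u. a \<in> M \<Longrightarrow> b \<in> M \<Longrightarrow> u \<in> W \<Longrightarrow> u \<notin> M \<Longrightarrow> \<not> sep u a b) \<Longrightarrow> md W M"
  unfolding md_def by blast

lemma mdD: "md W M \<Longrightarrow> a \<in> M \<Longrightarrow> b \<in> M \<Longrightarrow> u \<in> W \<Longrightarrow> u \<notin> M \<Longrightarrow> \<not> sep u a b"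
  unfolding md_def by blast

lemma mdI_pivot:
  assumes "M \<subseteq> W" "p \<in> M" "\<And>a u. a \<in> M \<Longrightarrow> u \<in> W \<Longrightarrow> u \<notin> M \<Longrightarrow> \<not> sep u p a"
  shows "md W M"
proof (rule mdI)
  fix a b u assume "a \<in> M" "b \<in> M" "u \<in> W" "u \<notin> M"
  then have "\<not> sep u p a" "\<not> sep u p b" using assms(3) by auto
  then show "\<not> sep u a b" using nsep_sym nsep_trans by blast
qed (use assms in auto)

end


context TS begin

definition isI :: "'a set \<Rightarrow> 'a \<Rightarrow> bool" where
  "isI Z u \<longleftrightarrow> u \<in> V - Z \<and> (\<forall>a\<in>Z. \<forall>b\<in>Z. \<not> sep u a b)"
definition isA :: "'a set \<Rightarrow> 'a \<Rightarrow> 'a \<Rightarrow> bool" where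
  "isA Z u \<alpha> \<longleftrightarrow> u \<in> V - Z \<and> \<alpha> \<in> Z \<and> (\<forall>x\<in>Z-{\<alpha>}. \<not> sep x \<alpha> u)"
definition isE :: "'a set \<Rightarrow> 'a \<Rightarrow> bool" where
  "isE Z u \<longleftrightarrow> u \<in> V - Z \<and> pr (Z \<union> {u})"
definition sp :: "'a set \<Rightarrow> 'a \<Rightarrow> 'a \<Rightarrow> bool" where
  "sp Z a b \<longleftrightarrow> (\<forall>x\<in>Z. \<not> sep x a b)"
definition nD :: "'a set \<Rightarrow> 'a \<Rightarrow> 'a \<Rightarrow> bool" where
  "nD Z p z \<longleftrightarrow> (isI Z z \<and> (\<forall>x\<in>Z. \<not> sep z p x)) \<or> (\<exists>\<alpha>. isA Z z \<alpha> \<and> \<not> sep p \<alpha> z)"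
definition Gp :: "'a set \<Rightarrow> 'a \<Rightarrow> 'a \<Rightarrow> bool" where
  "Gp Z p q \<longleftrightarrow> p \<noteq> q \<and> p \<in> V - Z \<and> q \<in> V - Z \<and> pr (Z \<union> {p,q})"
definition sg :: "'a set \<Rightarrow> 'a \<Rightarrow> 'a \<Rightarrow> bool" where
  "sg Z p q \<longleftrightarrow> (isI Z p \<and> isI Z q) \<or> (\<exists>\<alpha>. isA Z p \<alpha> \<and> isA Z q \<alpha>)"

lemma Gp_sym: "Gp Z p q \<Longrightarrow> Gp Z q p"
  unfolding Gp_def by (auto simp add: insert_commute)

lemma sg_sym: "sg Z p q \<Longrightarrow> sg Z q p"
  unfolding sg_def by blast

lemma two_in_big: assumes "big Z" obtains a b where "a \<in> Z" "b \<in> Z" "a \<noteq> b"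
  using big_third[OF assms] big_ne[OF assms] by metis

lemma classify:
  assumes Z: "Z \<subseteq> V" "pr Z" and u: "u \<in> V - Z" "\<not> pr (Z \<union> {u})"
  shows "isI Z u \<or> (\<exists>\<alpha>. isA Z u \<alpha>)"
proof -
  have "big (Z \<union> {u})" by (rule big_mono[OF pr_big[OF Z(2)]]) blast
  then obtain M where M: "md (Z\<union>{u}) M" "M \<noteq> {}" "M \<noteq> Z \<union> {u}" "\<forall>x. M \<noteq> {x}"
    using u(2) unfolding pr_def by auto
  have MZ: "M \<subseteq> Z \<union> {u}" using M(1) unfolding md_def by blast
  have "md Z (M \<inter> Z)" using md_restrict[OF M(1), of Z] by blast
  then have "M \<inter> Z = {} \<or> M \<inter> Z = Z \<or> (\<exists>x. M \<inter> Z = {x})" using pr_triv[OF Z(2)] by blast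
  then consider "M \<inter> Z = {}" | "M \<inter> Z = Z" | x where "M \<inter> Z = {x}" by blast
  then show ?thesis
  proof cases
    case 1
    then have "M \<subseteq> {u}" using MZ by blast
    then show ?thesis using M by (metis subset_singletonD)
  next
    case 2
    then have "M = Z" using MZ M(3) u(1) by blast
    then have "isI Z u" using M(1) u(1) unfolding isI_def md_def by blast
    then show ?thesis by blast
  next
    case 3
    then have "M = {x,u}" using MZ M(4) by blast
    then have "isA Z u x" using M(1) u(1) 3 unfolding isA_def md_def by blast
    then show ?thesis by blast
  qed
qed

lemma isA_unique:
  assumes Z: "Z \<subseteq> V" "pr Z" and a: "isA Z u \<alpha>" "isA Z u \<beta>"
  shows "\<alpha> = \<beta>"
proof (rule ccontr)
  assume ne: "\<alpha> \<noteq> \<beta>"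
  obtain c where c: "c \<in> Z" "c \<noteq> \<alpha>" "c \<noteq> \<beta>" using big_third[OF pr_big[OF Z(2)]] by blast
  have "md Z {\<alpha>,\<beta>}"
  proof (rule mdI)
    show "{\<alpha>, \<beta>} \<subseteq> Z" using a unfolding isA_def by blast
  next
    fix a b w assume "a \<in> {\<alpha>,\<beta>}" "b \<in> {\<alpha>,\<beta>}" "w \<in> Z" "w \<notin> {\<alpha>,\<beta>}"
    then have "\<not> sep w a u" "\<not> sep w b u" using a unfolding isA_def by auto
    then show "\<not> sep w a b" using nsep_sym nsep_trans by blast
  qed
  then show False using not_pr[of Z "{\<alpha>,\<beta>}" \<alpha> \<beta> c] ne c Z by blast
qed

lemma isI_not_isA:
  assumes Z: "Z \<subseteq> V" "pr Z" and a: "isI Z u" "isA Z u \<alpha>"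
  shows False
proof -
  obtain c1 where c1: "c1 \<in> Z" "c1 \<noteq> \<alpha>" using big_third[OF pr_big[OF Z(2)]] by blast
  obtain c2 where c2: "c2 \<in> Z" "c2 \<noteq> \<alpha>" "c2 \<noteq> c1" using big_third[OF pr_big[OF Z(2)]] by blast
  have "md Z (Z - {\<alpha>})"
  proof (rule mdI)
    fix a b w assume ab: "a \<in> Z - {\<alpha>}" "b \<in> Z - {\<alpha>}" and w: "w \<in> Z" "w \<notin> Z - {\<alpha>}"
    then have w\<alpha>: "w = \<alpha>" by blast
    have 1: "\<not> sep a \<alpha> u" "\<not> sep b \<alpha> u" using a(2) ab unfolding isA_def by auto
    have 2: "\<not> sep u a b" using a(1) ab unfolding isI_def by auto
    show "\<not> sep w a b" using 1 2 unfolding w\<alpha> sep_def by metis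
  qed auto
  moreover have "\<alpha> \<in> Z" using a(2) isA_def by blast
  ultimately show False using not_pr[of Z "Z - {\<alpha>}" c1 c2 \<alpha>] c1 c2 Z by blast
qed

lemma isE_not_isI:
  assumes Z: "Z \<subseteq> V" "pr Z" and a: "isE Z u" "isI Z u"
  shows False
proof -
  obtain c1 c2 where c: "c1 \<in> Z" "c2 \<in> Z" "c1 \<noteq> c2" using two_in_big[OF pr_big[OF Z(2)]] by blast
  have "md (Z \<union> {u}) Z"
    using a(2) unfolding isI_def by (intro mdI) auto
  then show False using not_pr[of "Z \<union> {u}" Z c1 c2 u] c a unfolding isE_def by blast
qed

lemma isE_not_isA:
  assumes Z: "Z \<subseteq> V" "pr Z" and a: "isE Z u" "isA Z u \<alpha>"
  shows False
proof -
  obtain c where c: "c \<in> Z" "c \<noteq> \<alpha>" using big_third[OF pr_big[OF Z(2)]] by blast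
  have u: "u \<in> V" "u \<notin> Z" "\<alpha> \<in> Z" using a(2) unfolding isA_def by auto
  have "md (Z \<union> {u}) {\<alpha>, u}"
  proof (rule mdI_pivot[where p=\<alpha>])
    fix b w assume b: "b \<in> {\<alpha>,u}" and w: "w \<in> Z \<union> {u}" "w \<notin> {\<alpha>,u}"
    then have wZ: "w \<in> Z - {\<alpha>}" by blast
    then have "\<not> sep w \<alpha> u" using a(2) unfolding isA_def by blast
    moreover have "\<not> sep w \<alpha> \<alpha>" using nsep_refl by blast
    ultimately show "\<not> sep w \<alpha> b" using b by blast
  qed (use u in auto)
  then show False using not_pr[of "Z \<union> {u}" "{\<alpha>,u}" \<alpha> u c] c a u unfolding isE_def by blast
qed

lemma sp_sym: "sp Z a b \<Longrightarrow> sp Z b a"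
  unfolding sp_def using nsep_sym by blast

lemma sp_trans: "sp Z a b \<Longrightarrow> sp Z b c \<Longrightarrow> sp Z a c"
  unfolding sp_def using nsep_trans by blast

lemma sp_refl: "sp Z a a"
  unfolding sp_def using nsep_refl by blast

lemma sp_isI: assumes "sp Z a b" "isI Z a" "b \<in> V - Z" shows "isI Z b"
  unfolding isI_def
proof (intro conjI ballI)
  fix x y assume xy: "x \<in> Z" "y \<in> Z"
  have "\<not> sep x a b" "\<not> sep y a b" using assms(1) xy unfolding sp_def by auto
  moreover have "\<not> sep a x y" using assms(2) xy unfolding isI_def by auto
  ultimately show "\<not> sep b x y" unfolding sep_def by metis
qed (use assms in auto)

lemma sp_isA: assumes "sp Z a b" "isA Z a \<alpha>" "b \<in> V - Z" shows "isA Z b \<alpha>"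
  using assms unfolding sp_def isA_def using nsep_trans by blast

lemma sp_sg:
  assumes Z: "Z \<subseteq> V" "pr Z" and "sp Z a b" "\<not> isE Z a" "a \<in> V - Z" "b \<in> V - Z"
  shows "sg Z a b"
proof -
  have "isI Z a \<or> (\<exists>\<alpha>. isA Z a \<alpha>)" using classify[OF Z, of a] assms(4,5) unfolding isE_def by blast
  then show ?thesis
  proof
    assume "isI Z a" then show ?thesis using sp_isI assms(3,6) unfolding sg_def by blast
  next
    assume "\<exists>\<alpha>. isA Z a \<alpha>" then obtain \<alpha> where "isA Z a \<alpha>" by blast
    then show ?thesis using sp_isA[OF assms(3)] assms(6) unfolding sg_def by blast
  qed
qed

lemma sg_sp_trans: "sg Z z q \<Longrightarrow> sp Z p z \<Longrightarrow> p \<in> V - Z \<Longrightarrow> sg Z p q"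
  unfolding sg_def using sp_isI sp_isA sp_sym by blast

lemma Gp_dom: "Gp Z p q \<Longrightarrow> p \<in> V - Z \<and> q \<in> V - Z \<and> p \<noteq> q"
  unfolding Gp_def by blast

end


context TS begin

lemma PL1:
  assumes Z: "Z \<subseteq> V" "pr Z" and G: "Gp Z p q"
  shows "\<not> nD Z p q"
proof
  assume "nD Z p q"
  then consider (I) "isI Z q" "\<forall>x\<in>Z. \<not> sep q p x" | (A) \<alpha> where "isA Z q \<alpha>" "\<not> sep p \<alpha> q"
    unfolding nD_def by blast
  then show False
  proof cases
    case I
    obtain c1 c2 where c: "c1 \<in> Z" "c2 \<in> Z" "c1 \<noteq> c2" using two_in_big[OF pr_big[OF Z(2)]] by blast
    have "md (Z \<union> {p,q}) (Z \<union> {p})"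
    proof (rule mdI_pivot[where p=c1])
      fix a w assume a: "a \<in> Z \<union> {p}" and w: "w \<in> Z \<union> {p,q}" "w \<notin> Z \<union> {p}"
      then have wq: "w = q" by blast
      show "\<not> sep w c1 a"
      proof (cases "a = p")
        case True then show ?thesis using I(2) c(1) wq nsep_sym by blast
      next
        case False then have "a \<in> Z" using a by blast
        then show ?thesis using I(1) c(1) wq unfolding isI_def by blast
      qed
    qed (use c in auto)
    moreover have "q \<notin> Z \<union> {p}" using G unfolding Gp_def by auto
    ultimately show False using not_pr[of "Z \<union> {p,q}" "Z \<union> {p}" c1 c2 q] c G unfolding Gp_def by blast
  next
    case A
    have "md (Z \<union> {p,q}) {\<alpha>,q}"
    proof (rule mdI_pivot[where p=\<alpha>])
      fix a w assume a: "a \<in> {\<alpha>,q}" and w: "w \<in> Z \<union> {p,q}" "w \<notin> {\<alpha>,q}"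
      show "\<not> sep w \<alpha> a"
      proof (cases "a = \<alpha>")
        case True then show ?thesis using nsep_refl by blast
      next
        case False then have aq: "a = q" using a by blast
        show ?thesis
        proof (cases "w = p")
          case True then show ?thesis using A(2) aq by blast
        next
          case False then have "w \<in> Z - {\<alpha>}" using w by blast
          then show ?thesis using A(1) aq unfolding isA_def by blast
        qed
      qed
    qed (use A(1) in \<open>auto simp: isA_def\<close>)
    moreover have "\<alpha> \<noteq> q" "p \<notin> {\<alpha>,q}" using A(1) G unfolding isA_def Gp_def by auto
    ultimately show False using not_pr[of "Z \<union> {p,q}" "{\<alpha>,q}" \<alpha> q p] G unfolding Gp_def by blast
  qed
qed

lemma PL2:
  assumes Z: "Z \<subseteq> V" "pr Z" and G: "Gp Z p q"
  shows "\<not> sg Z p q"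
proof
  assume "sg Z p q"
  then consider (I) "isI Z p" "isI Z q" | (A) \<alpha> where "isA Z p \<alpha>" "isA Z q \<alpha>"
    unfolding sg_def by blast
  then show False
  proof cases
    case I
    obtain c1 c2 where c: "c1 \<in> Z" "c2 \<in> Z" "c1 \<noteq> c2" using two_in_big[OF pr_big[OF Z(2)]] by blast
    have "md (Z \<union> {p,q}) Z"
    proof (rule mdI)
      fix a b w assume "a \<in> Z" "b \<in> Z" "w \<in> Z \<union> {p,q}" "w \<notin> Z"
      then show "\<not> sep w a b" using I unfolding isI_def by blast
    qed blast
    moreover have "p \<notin> Z" using G unfolding Gp_def by auto
    ultimately show False using not_pr[of "Z \<union> {p,q}" Z c1 c2 p] c G unfolding Gp_def by blast
  next
    case A
    obtain c where c: "c \<in> Z" "c \<noteq> \<alpha>" using big_third[OF pr_big[OF Z(2)]] by blast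
    have "md (Z \<union> {p,q}) {\<alpha>,p,q}"
    proof (rule mdI_pivot[where p=\<alpha>])
      fix a w assume a: "a \<in> {\<alpha>,p,q}" and w: "w \<in> Z \<union> {p,q}" "w \<notin> {\<alpha>,p,q}"
      then have "w \<in> Z - {\<alpha>}" by blast
      then show "\<not> sep w \<alpha> a" using a A nsep_refl unfolding isA_def by blast
    qed (use A in \<open>auto simp: isA_def\<close>)
    moreover have "\<alpha> \<noteq> p" "c \<notin> {\<alpha>,p,q}" using A G c unfolding isA_def Gp_def by auto
    ultimately show False using not_pr[of "Z \<union> {p,q}" "{\<alpha>,p,q}" \<alpha> p c] c G unfolding Gp_def by blast
  qed
qed

lemma PL3:
  assumes Z: "Z \<subseteq> V" "pr Z" and pq: "p \<in> V - Z" "q \<in> V - Z" "p \<noteq> q"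
    and nE: "\<not> isE Z p" "\<not> isE Z q" and nsg: "\<not> sg Z p q" and nnD: "\<not> nD Z p q"
  shows "Gp Z p q"
proof -
  have cp: "isI Z p \<or> (\<exists>\<beta>. isA Z p \<beta>)" using classify[OF Z, of p] pq nE unfolding isE_def by blast
  have cq: "isI Z q \<or> (\<exists>\<beta>. isA Z q \<beta>)" using classify[OF Z, of q] pq nE unfolding isE_def by blast
  have "pr (Z \<union> {p,q})"
  proof (rule prI)
    show "big (Z \<union> {p,q})" by (rule big_mono[OF pr_big[OF Z(2)]]) blast
  next
    fix M assume M: "md (Z \<union> {p,q}) M"
    show "M = {} \<or> M = Z \<union> {p,q} \<or> (\<exists>x. M = {x})"
    proof (rule ccontr)
      assume nt: "\<not> ?thesis"
      have MZ: "M \<subseteq> Z \<union> {p,q}" using M unfolding md_def by blast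
      have "md Z (M \<inter> Z)" using md_restrict[OF M, of Z] by blast
      then have "M \<inter> Z = {} \<or> M \<inter> Z = Z \<or> (\<exists>x. M \<inter> Z = {x})" using pr_triv[OF Z(2)] by blast
      then consider (e) "M \<inter> Z = {}" | (f) "M \<inter> Z = Z" | (s) \<alpha> where "M \<inter> Z = {\<alpha>}" by auto
      then show False
      proof cases
        case e
        then have "M \<subseteq> {p,q}" using MZ by blast
        have pM: "p \<in> M"
        proof (rule ccontr)
          assume "p \<notin> M" then have "M \<subseteq> {q}" using \<open>M \<subseteq> {p,q}\<close> by blast
          then show False using nt subset_singletonD by metis
        qed
        have qM: "q \<in> M"
        proof (rule ccontr)
          assume "q \<notin> M" then have "M \<subseteq> {p}" using \<open>M \<subseteq> {p,q}\<close> by blast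
          then show False using nt subset_singletonD by metis
        qed
        have "sp Z p q" unfolding sp_def
        proof
          fix x assume "x \<in> Z"
          then show "\<not> sep x p q" using mdD[OF M, of p q x] pM qM e by blast
        qed
        then show False using sp_sg[OF Z \<open>sp Z p q\<close> nE(1)] pq nsg by blast
      next
        case f
        then have ZM: "Z \<subseteq> M" by blast
        show False
        proof (cases "p \<in> M")
          case pM: True
          show False
          proof (cases "q \<in> M")
            case True then show False using nt ZM pM MZ by blast
          next
            case qM: False
            have "isI Z q" unfolding isI_def using mdD[OF M, of _ _ q] ZM qM pq by blast
            moreover have "\<forall>x\<in>Z. \<not> sep q p x" using mdD[OF M, of p _ q] ZM qM pM pq by blast
            ultimately show False using nnD unfolding nD_def by blast
          qed
        next
          case pM: False
          show False
          proof (cases "q \<in> M")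
            case qM: True
            have Ip: "isI Z p" unfolding isI_def using mdD[OF M, of _ _ p] ZM pM pq by blast
            have h: "\<forall>x\<in>Z. \<not> sep p q x" using mdD[OF M, of q _ p] ZM qM pM pq by blast
            from cq show False
            proof
              assume "isI Z q" then show False using Ip nsg unfolding sg_def by blast
            next
              assume "\<exists>\<beta>. isA Z q \<beta>"
              then obtain \<beta> where b: "isA Z q \<beta>" by blast
              then have "\<not> sep p \<beta> q" using h nsep_sym unfolding isA_def by blast
              then show False using nnD b unfolding nD_def by blast
            qed
          next
            case qM: False
            have "isI Z p" unfolding isI_def using mdD[OF M, of _ _ p] ZM pM pq by blast
            moreover have "isI Z q" unfolding isI_def using mdD[OF M, of _ _ q] ZM qM pq by blast
            ultimately show False using nsg unfolding sg_def by blast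
          qed
        qed
      next
        case s
        then have aZ: "\<alpha> \<in> Z" "\<alpha> \<in> M" by auto
        have Msub: "M \<subseteq> {\<alpha>,p,q}" using s MZ by blast
        have out: "\<And>x. x \<in> Z - {\<alpha>} \<Longrightarrow> x \<notin> M" using s by blast
        show False
        proof (cases "p \<in> M")
          case pM: True
          have Ap: "isA Z p \<alpha>" unfolding isA_def using mdD[OF M, of \<alpha> p] out aZ pM pq by blast
          show False
          proof (cases "q \<in> M")
            case True
            have "isA Z q \<alpha>" unfolding isA_def using mdD[OF M, of \<alpha> q] out aZ True pq by blast
            then show False using Ap nsg unfolding sg_def by blast
          next
            case qM: False
            have h: "\<not> sep q \<alpha> p" using mdD[OF M, of \<alpha> p q] aZ pM qM pq by blast
            from cq show False
            proof
              assume Iq: "isI Z q"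
              have "\<forall>x\<in>Z. \<not> sep q p x"
              proof
                fix x assume "x \<in> Z"
                then have "\<not> sep q \<alpha> x" using Iq aZ unfolding isI_def by blast
                then show "\<not> sep q p x" using h nsep_sym nsep_trans by blast
              qed
              then show False using nnD Iq unfolding nD_def by blast
            next
              assume "\<exists>\<beta>. isA Z q \<beta>"
              then obtain \<beta> where b: "isA Z q \<beta>" by blast
              have "\<beta> \<noteq> \<alpha>" using b Ap nsg unfolding sg_def by blast
              then have h1: "\<not> sep \<beta> \<alpha> p" using Ap b unfolding isA_def by blast
              have h2: "\<not> sep \<alpha> \<beta> q" using \<open>\<beta> \<noteq> \<alpha>\<close> b aZ unfolding isA_def by blast
              have "\<not> sep p \<beta> q" using h h1 h2 unfolding sep_def by metis
              then show False using nnD b unfolding nD_def by blast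
            qed
          qed
        next
          case pM: False
          then have qM: "q \<in> M" using nt Msub aZ by blast
          have "isA Z q \<alpha>" unfolding isA_def using mdD[OF M, of \<alpha> q] out aZ qM pq by blast
          moreover have "\<not> sep p \<alpha> q" using mdD[OF M, of \<alpha> q p] aZ pM qM pq by blast
          ultimately show False using nnD unfolding nD_def by blast
        qed
      qed
    qed
  qed
  then show ?thesis using pq unfolding Gp_def by blast
qed

end


context TS begin

lemma nD_transfer:
  assumes Z: "Z \<subseteq> V" "pr Z" and h: "nD Z q z" "sp Z p z" "\<not> sep q p z" "p \<in> V - Z"
  shows "nD Z q p"
proof -
  from h(1) consider (I) "isI Z z" "\<forall>x\<in>Z. \<not> sep z q x" | (A) \<alpha> where "isA Z z \<alpha>" "\<not> sep q \<alpha> z"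
    unfolding nD_def by blast
  then show ?thesis
  proof cases
    case I
    have Ip: "isI Z p" using sp_isI[OF sp_sym[OF h(2)] I(1) h(4)] .
    have "\<forall>x\<in>Z. \<not> sep p q x"
    proof
      fix x assume x: "x \<in> Z"
      have "\<not> sep z q x" using I(2) x by blast
      moreover have "\<not> sep x p z" using h(2) x unfolding sp_def by blast
      ultimately show "\<not> sep p q x" using h(3) unfolding sep_def by metis
    qed
    then show ?thesis using Ip unfolding nD_def by blast
  next
    case A
    have "isA Z p \<alpha>" using sp_isA[OF sp_sym[OF h(2)] A(1) h(4)] .
    moreover have "\<not> sep q \<alpha> p" using A(2) h(3) nsep_sym nsep_trans by blast
    ultimately show ?thesis unfolding nD_def by blast
  qed
qed

lemma twin_G:
  assumes Z: "Z \<subseteq> V" "pr Z" and G: "Gp Z p q" and h: "sp Z p z" "\<not> sep q p z" "z \<in> V - Z" "z \<noteq> q"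
    and nE: "\<not> isE Z z" "\<not> isE Z q"
  shows "Gp Z z q"
proof (rule ccontr)
  assume nG: "\<not> Gp Z z q"
  have "\<not> sg Z q z"
  proof
    assume "sg Z q z"
    then have "sg Z z q" by (rule sg_sym)
    then have "sg Z p q" using sg_sp_trans h(1) G unfolding Gp_def by blast
    then show False using PL2[OF Z G] by blast
  qed
  moreover have "\<not> Gp Z q z" using nG Gp_sym by blast
  ultimately have "nD Z q z" using PL3[OF Z, of q z] G h nE unfolding Gp_def by blast
  then have "nD Z q p" using nD_transfer[OF Z _ h(1,2)] G unfolding Gp_def by blast
  then show False using PL1[OF Z Gp_sym[OF G]] by blast
qed

lemma sp_notG:
  assumes Z: "Z \<subseteq> V" "pr Z" and h: "sp Z a b" "\<not> isE Z a" "a \<in> V - Z" "b \<in> V - Z"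
  shows "\<not> Gp Z a b"
  using PL2[OF Z] sp_sg[OF Z h] by blast

lemma TL:
  assumes Z: "Z \<subseteq> V" "pr Z" and G: "Gp Z p q" and z: "z \<in> V - Z" "z \<noteq> p" "z \<noteq> q"
    and np: "\<not> pr (Z \<union> {p,q,z})"
  shows "(nD Z p z \<and> nD Z q z) \<or> (sp Z p z \<and> \<not> sep q p z) \<or> (sp Z q z \<and> \<not> sep p q z)"
proof -
  let ?P = "Z \<union> {p,q}"
  let ?Y = "Z \<union> {p,q,z}"
  have prP: "pr ?P" using G unfolding Gp_def by blast
  have "big ?Y" by (rule big_mono[OF pr_big[OF Z(2)]]) blast
  then obtain M where M: "md ?Y M" "M \<noteq> {}" "M \<noteq> ?Y" "\<forall>x. M \<noteq> {x}"
    using np unfolding pr_def by auto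
  have MY: "M \<subseteq> ?Y" using M(1) unfolding md_def by blast
  have "md ?P (M \<inter> ?P)" using md_restrict[OF M(1), of ?P] by blast
  then have "M \<inter> ?P = {} \<or> M \<inter> ?P = ?P \<or> (\<exists>x. M \<inter> ?P = {x})" using pr_triv[OF prP] by blast
  then consider (e) "M \<inter> ?P = {}" | (f) "M \<inter> ?P = ?P" | (s) y where "M \<inter> ?P = {y}" by auto
  then show ?thesis
  proof cases
    case e
    then have "M \<subseteq> {z}" using MY by blast
    then show ?thesis using M(2,4) subset_singletonD by metis
  next
    case f
    then have zM: "z \<notin> M" using M(3) MY by blast
    have PM: "?P \<subseteq> M" using f by blast
    have Iz: "isI Z z" unfolding isI_def using mdD[OF M(1), of _ _ z] PM zM z by blast
    have "\<forall>x\<in>Z. \<not> sep z p x" "\<forall>x\<in>Z. \<not> sep z q x" using mdD[OF M(1), of _ _ z] PM zM by blast+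
    then show ?thesis using Iz unfolding nD_def by blast
  next
    case s
    have zM: "z \<in> M"
    proof (rule ccontr)
      assume "z \<notin> M" then have "M = {y}" using s MY by blast
      then show False using M(4) by blast
    qed
    have yM: "y \<in> M" "y \<in> ?P" using s by auto
    have out: "\<And>w. w \<in> ?P \<Longrightarrow> w \<noteq> y \<Longrightarrow> w \<notin> M" using s by blast
    have nsw: "\<And>w. w \<in> ?P \<Longrightarrow> w \<noteq> y \<Longrightarrow> \<not> sep w y z"
      using mdD[OF M(1), of y z] yM zM out by blast
    consider (yZ) "y \<in> Z" | (yp) "y = p" | (yq) "y = q" using yM by blast
    then show ?thesis
    proof cases
      case yZ
      have "isA Z z y" unfolding isA_def using nsw yZ z by blast
      moreover have "\<not> sep p y z" "\<not> sep q y z" using nsw yZ G unfolding Gp_def by auto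
      ultimately show ?thesis unfolding nD_def by blast
    next
      case yp
      have "sp Z p z" unfolding sp_def using nsw yp G unfolding Gp_def by auto
      moreover have "\<not> sep q p z" using nsw yp G unfolding Gp_def by auto
      ultimately show ?thesis by blast
    next
      case yq
      have "sp Z q z" unfolding sp_def using nsw yq G unfolding Gp_def by auto
      moreover have "\<not> sep p q z" using nsw yq G unfolding Gp_def by auto
      ultimately show ?thesis by blast
    qed
  qed
qed

lemma nDnD1:
  assumes Z: "Z \<subseteq> V" "pr Z" and h: "nD Z u a" "nD Z u b" "sp Z a b"
  shows "\<not> sep u a b"
proof -
  from h(1) consider (I) "isI Z a" "\<forall>x\<in>Z. \<not> sep a u x" | (A) \<alpha> where "isA Z a \<alpha>" "\<not> sep u \<alpha> a"
    unfolding nD_def by blast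
  then show ?thesis
  proof cases
    case I
    have bI: "isI Z b \<and> (\<forall>x\<in>Z. \<not> sep b u x)"
      using h(2) unfolding nD_def
    proof
      assume "\<exists>\<beta>. isA Z b \<beta> \<and> \<not> sep u \<beta> b"
      then obtain \<beta> where "isA Z b \<beta>" by blast
      then have "isA Z a \<beta>" using sp_isA[OF sp_sym[OF h(3)]] I(1) unfolding isI_def by blast
      then show ?thesis using isI_not_isA[OF Z I(1)] by blast
    qed
    obtain x0 where x0: "x0 \<in> Z" using big_ne[OF pr_big[OF Z(2)]] by blast
    have "\<not> sep a u x0" "\<not> sep b u x0" "\<not> sep x0 a b" using I bI x0 h(3) unfolding sp_def by auto
    then show ?thesis unfolding sep_def by metis
  next
    case A
    have bA: "isA Z b \<alpha>" using sp_isA[OF h(3) A(1)] h(2) unfolding nD_def isI_def isA_def by blast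
    have "\<not> sep u \<alpha> b" using h(2) unfolding nD_def
    proof
      assume "isI Z b \<and> (\<forall>x\<in>Z. \<not> sep b u x)"
      then show ?thesis using isI_not_isA[OF Z _ bA] by blast
    next
      assume "\<exists>\<beta>. isA Z b \<beta> \<and> \<not> sep u \<beta> b"
      then obtain \<beta> where "isA Z b \<beta>" "\<not> sep u \<beta> b" by blast
      then show ?thesis using isA_unique[OF Z bA] by blast
    qed
    then show ?thesis using A(2) nsep_sym nsep_trans by blast
  qed
qed

lemma nDnD2:
  assumes Z: "Z \<subseteq> V" "pr Z" and h: "nD Z a u" "nD Z b u" "sp Z a b"
  shows "\<not> sep u a b"
proof -
  from h(1) consider (I) "isI Z u" "\<forall>x\<in>Z. \<not> sep u a x" | (A) \<alpha> where "isA Z u \<alpha>" "\<not> sep a \<alpha> u"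
    unfolding nD_def by blast
  then show ?thesis
  proof cases
    case I
    have "\<forall>x\<in>Z. \<not> sep u b x" using h(2) unfolding nD_def
    proof
      assume "\<exists>\<beta>. isA Z u \<beta> \<and> \<not> sep b \<beta> u"
      then show ?thesis using isI_not_isA[OF Z I(1)] by blast
    qed blast
    moreover obtain x0 where x0: "x0 \<in> Z" using big_ne[OF pr_big[OF Z(2)]] by blast
    ultimately show ?thesis using I(2) nsep_sym nsep_trans by blast
  next
    case A
    have "\<not> sep b \<alpha> u" using h(2) unfolding nD_def
    proof
      assume "isI Z u \<and> (\<forall>x\<in>Z. \<not> sep u b x)"
      then show ?thesis using isI_not_isA[OF Z _ A(1)] by blast
    next
      assume "\<exists>\<beta>. isA Z u \<beta> \<and> \<not> sep b \<beta> u"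
      then obtain \<beta> where "isA Z u \<beta>" "\<not> sep b \<beta> u" by blast
      then show ?thesis using isA_unique[OF Z A(1)] by blast
    qed
    moreover have "\<not> sep \<alpha> a b" using h(3) A(1) unfolding sp_def isA_def by blast
    ultimately show ?thesis using A(2) unfolding sep_def by metis
  qed
qed

end


context TS begin

lemma PL3': 
  assumes Z: "Z \<subseteq> V" "pr Z" and pq: "p \<in> V - Z" "q \<in> V - Z" "p \<noteq> q"
    and nE: "\<not> isE Z p" "\<not> isE Z q" and nsg: "\<not> sg Z p q" and nG: "\<not> Gp Z p q"
  shows "nD Z p q"
  using PL3[OF Z pq nE nsg] nG by blast

lemma EF:
  assumes Z: "Z \<subseteq> V" "pr Z" and u: "isE Z u" and v: "v \<in> V - Z" "v \<noteq> u" and nG: "\<not> Gp Z u v"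
  shows "(isI Z v \<and> (\<forall>x\<in>Z. \<not> sep v u x)) \<or> (\<exists>\<alpha>. isA Z v \<alpha> \<and> \<not> sep u \<alpha> v) \<or> sp Z u v"
proof -
  let ?Z' = "Z \<union> {u}"
  have uV: "u \<in> V" "u \<notin> Z" using u unfolding isE_def by auto
  have Z': "?Z' \<subseteq> V" "pr ?Z'" using Z uV u unfolding isE_def by auto
  have v': "v \<in> V - ?Z'" using v by blast
  have eq: "?Z' \<union> {v} = Z \<union> {u,v}" by blast
  have "\<not> pr (?Z' \<union> {v})" using nG v uV unfolding eq Gp_def by auto
  then have "isI ?Z' v \<or> (\<exists>y. isA ?Z' v y)" using classify[OF Z' v'] by blast
  then show ?thesis
  proof
    assume h: "isI ?Z' v"
    then have "isI Z v" using v unfolding isI_def by blast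
    moreover have "\<forall>x\<in>Z. \<not> sep v u x" using h unfolding isI_def by blast
    ultimately show ?thesis by blast
  next
    assume "\<exists>y. isA ?Z' v y"
    then obtain y where y: "isA ?Z' v y" by blast
    then have yZ': "y \<in> ?Z'" and hy: "\<forall>x\<in>?Z'-{y}. \<not> sep x y v" unfolding isA_def by auto
    show ?thesis
    proof (cases "y = u")
      case True
      then have "sp Z u v" using hy uV unfolding sp_def by blast
      then show ?thesis by blast
    next
      case False
      then have yZ: "y \<in> Z" using yZ' by blast
      have "isA Z v y" using hy yZ v unfolding isA_def by blast
      moreover have "\<not> sep u y v" using hy False by blast
      ultimately show ?thesis by blast
    qed
  qed
qed

lemma ER:
  assumes Z: "Z \<subseteq> V" "pr Z" and prV: "pr V" and ab: "a \<in> V - Z" "b \<in> V - Z" "a \<noteq> b"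
  shows "\<exists>v w. v \<in> V - Z \<and> w \<in> V - Z \<and> v \<noteq> w \<and> pr (Z \<union> {v,w})"
proof (rule ccontr)
  assume "\<not> ?thesis"
  then have nG: "\<And>v w. \<not> Gp Z v w" unfolding Gp_def by blast
  obtain c1 c2 where c: "c1 \<in> Z" "c2 \<in> Z" "c1 \<noteq> c2" using two_in_big[OF pr_big[OF Z(2)]] by blast
  have cl: "\<And>u. u \<in> V - Z \<Longrightarrow> \<not> isE Z u \<Longrightarrow> isI Z u \<or> (\<exists>\<alpha>. isA Z u \<alpha>)"
    using classify[OF Z] unfolding isE_def by blast
  have noI: "\<not> isI Z u" for u
  proof
    assume u0: "isI Z u"
    let ?M = "V - {u. u \<in> V - Z \<and> isI Z u}"
    have "md V ?M"
    proof (rule mdI_pivot[where p=c1])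
      fix a w assume a: "a \<in> ?M" and w: "w \<in> V" "w \<notin> ?M"
      then have wI: "isI Z w" "w \<in> V - Z" by auto
      show "\<not> sep w c1 a"
      proof (cases "a \<in> Z")
        case True then show ?thesis using wI c unfolding isI_def by blast
      next
        case aR: False
        then have aR': "a \<in> V - Z" "\<not> isI Z a" using a by auto
        have wa: "w \<noteq> a" using aR' wI by blast
        have "\<not> sep w a c1"
        proof (cases "isE Z a")
          case True
          have "(isI Z w \<and> (\<forall>x\<in>Z. \<not> sep w a x)) \<or> (\<exists>\<alpha>. isA Z w \<alpha> \<and> \<not> sep a \<alpha> w) \<or> sp Z a w"
            using EF[OF Z True wI(2)] wa nG by blast
          moreover have "\<not> (\<exists>\<alpha>. isA Z w \<alpha> \<and> \<not> sep a \<alpha> w)" using isI_not_isA[OF Z wI(1)] by blast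
          moreover have "\<not> sp Z a w" using sp_isI[OF sp_sym _ aR'(1)] wI(1) aR'(2) by blast
          ultimately show ?thesis using c by blast
        next
          case False
          then obtain \<beta> where b: "isA Z a \<beta>" using cl aR' by blast
          have "\<not> sg Z a w" using b wI aR' isI_not_isA[OF Z wI(1)] unfolding sg_def by blast
          moreover have "\<not> isE Z w" using isE_not_isI[OF Z _ wI(1)] by blast
          ultimately have "nD Z a w" using PL3'[OF Z aR'(1) wI(2) wa[symmetric] False] nG by blast
          then show ?thesis using c isI_not_isA[OF Z wI(1)] unfolding nD_def by blast
        qed
        then show ?thesis using nsep_sym by blast
      qed
    qed (use c Z in auto)
    moreover have "u \<in> V" "u \<notin> ?M" using u0 unfolding isI_def by auto
    ultimately show False using not_pr[of V ?M c1 c2 u] c Z prV by blast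
  qed
  have noA: "\<not> isA Z m \<alpha>" for m \<alpha>
  proof
    assume m0: "isA Z m \<alpha>"
    let ?B = "{m. isA Z m \<alpha>}"
    let ?M = "{\<alpha>} \<union> ?B"
    have aZ: "\<alpha> \<in> Z" using m0 unfolding isA_def by blast
    obtain c where cc: "c \<in> Z" "c \<noteq> \<alpha>" using big_third[OF pr_big[OF Z(2)]] by blast
    have "md V ?M"
    proof (rule mdI_pivot[where p=\<alpha>])
      fix a w assume a: "a \<in> ?M" and w: "w \<in> V" "w \<notin> ?M"
      show "\<not> sep w \<alpha> a"
      proof (cases "a = \<alpha>")
        case True then show ?thesis using nsep_refl by blast
      next
        case False
        then have aA: "isA Z a \<alpha>" using a by blast
        show ?thesis
        proof (cases "w \<in> Z")
          case True then show ?thesis using aA w unfolding isA_def by blast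
        next
          case wR: False
          have wR': "w \<in> V - Z" "\<not> isA Z w \<alpha>" using w wR by auto
          have aR: "a \<in> V - Z" using aA unfolding isA_def by blast
          have wa: "w \<noteq> a" using wR' aA by blast
          show ?thesis
          proof (cases "isE Z w")
            case True
            have "(isI Z a \<and> (\<forall>x\<in>Z. \<not> sep a w x)) \<or> (\<exists>\<alpha>'. isA Z a \<alpha>' \<and> \<not> sep w \<alpha>' a) \<or> sp Z w a"
              using EF[OF Z True aR] wa nG by blast
            moreover have "\<not> sp Z w a" using sp_isA[OF sp_sym aA wR'(1)] isE_not_isA[OF Z True] by blast
            ultimately show ?thesis using noI isA_unique[OF Z aA] by blast
          next
            case False
            then obtain \<beta> where b: "isA Z w \<beta>" using cl wR' noI by blast
            have "\<not> sg Z w a" using noI isA_unique[OF Z aA] wR'(2) unfolding sg_def by blast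
            moreover have "\<not> isE Z a" using isE_not_isA[OF Z _ aA] by blast
            ultimately have "nD Z w a" using PL3'[OF Z wR'(1) aR wa False] nG by blast
            then show ?thesis using noI isA_unique[OF Z aA] unfolding nD_def by blast
          qed
        qed
      qed
    qed (use aZ Z in \<open>auto simp: isA_def\<close>)
    moreover have "\<alpha> \<noteq> m" "c \<notin> ?M" "c \<in> V" using m0 cc Z unfolding isA_def by auto
    ultimately show False using not_pr[of V ?M \<alpha> m c] m0 prV by blast
  qed
  have allE: "\<And>u. u \<in> V - Z \<Longrightarrow> isE Z u" using cl noI noA by blast
  have "md V (V - Z)"
  proof (rule mdI)
    fix x y w assume xy: "x \<in> V - Z" "y \<in> V - Z" and w: "w \<in> V" "w \<notin> V - Z"
    show "\<not> sep w x y"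
    proof (cases "x = y")
      case True then show ?thesis using nsep_refl by blast
    next
      case False
      have "(isI Z y \<and> (\<forall>x'\<in>Z. \<not> sep y x x')) \<or> (\<exists>\<alpha>. isA Z y \<alpha> \<and> \<not> sep x \<alpha> y) \<or> sp Z x y"
        using EF[OF Z allE[OF xy(1)] xy(2)] False nG by blast
      then have "sp Z x y" using noI noA by blast
      then show ?thesis using w unfolding sp_def by blast
    qed
  qed blast
  then show False using not_pr[of V "V - Z" a b c1] ab c Z prV by blast
qed

lemma two_elems: assumes "finite A" "2 \<le> card A" obtains a b where "a \<in> A" "b \<in> A" "a \<noteq> b"
proof -
  obtain a where a: "a \<in> A" using assms by fastforce
  have "card (A - {a}) \<ge> 1" using assms a by auto
  then have "A - {a} \<noteq> {}" by (metis card.empty not_one_le_zero)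
  then obtain b where "b \<in> A - {a}" by blast
  then show ?thesis using a that by blast
qed

lemma chain:
  assumes prV: "pr V"
  shows "Z \<subseteq> V \<Longrightarrow> pr Z \<Longrightarrow> finite (V - Z) \<Longrightarrow> card (V - Z) = n \<Longrightarrow> even n \<Longrightarrow> 2 \<le> n \<Longrightarrow>
    \<exists>v w. v \<in> V - Z \<and> w \<in> V - Z \<and> v \<noteq> w \<and> pr (V - {v,w})"
proof (induction n arbitrary: Z rule: less_induct)
  case (less n)
  show ?case
  proof (cases "n = 2")
    case True
    then obtain v w where vw: "V - Z = {v,w}" "v \<noteq> w" using less.prems(4) card_2_iff by metis
    then have "V - {v,w} = Z" using less.prems(1) by blast
    then show ?thesis using vw less.prems(2) by blast
  next
    case False
    then have n4: "4 \<le> n" using less.prems(5,6) by presburger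
    obtain a b where ab: "a \<in> V - Z" "b \<in> V - Z" "a \<noteq> b"
      using two_elems[of "V - Z"] less.prems(3,4,6) by blast
    obtain v w where vw: "v \<in> V - Z" "w \<in> V - Z" "v \<noteq> w" "pr (Z \<union> {v,w})"
      using ER[OF less.prems(1,2) prV ab] by blast
    let ?Z' = "Z \<union> {v,w}"
    have eq: "V - ?Z' = (V - Z) - {v,w}" by blast
    have c: "card (V - ?Z') = n - 2" unfolding eq using vw less.prems(3,4)
      by (subst card_Diff_subset) auto
    have "\<exists>v' w'. v' \<in> V - ?Z' \<and> w' \<in> V - ?Z' \<and> v' \<noteq> w' \<and> pr (V - {v',w'})"
      using less.IH[of "n - 2" ?Z'] n4 vw less.prems c by auto
    then show ?thesis by blast
  qed
qed

end


locale HS = TS +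
  fixes X :: "'a set" and s0 :: 'a
  assumes XV: "X \<subseteq> V" and prX: "pr X" and prV: "pr V" and fin: "finite (V - X)"
    and noE: "\<And>u. u \<in> V - X \<Longrightarrow> \<not> isE X u"
    and noT: "\<And>p q z. p \<in> V - X \<Longrightarrow> q \<in> V - X \<Longrightarrow> z \<in> V - X \<Longrightarrow> p \<noteq> q \<Longrightarrow> p \<noteq> z \<Longrightarrow> q \<noteq> z
               \<Longrightarrow> \<not> pr (X \<union> {p,q,z})"
    and s0: "s0 \<in> V - X"
    and asym: "\<And>a b. a \<in> V - X \<Longrightarrow> b \<in> V - X \<Longrightarrow> a \<noteq> b \<Longrightarrow> sp X s0 a \<Longrightarrow> sp X s0 b
               \<Longrightarrow> nD X a b \<Longrightarrow> nD X b a \<Longrightarrow> False"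
begin

lemmas Z = XV prX

definition N :: "'a \<Rightarrow> 'a set" where "N y = {q. Gp X y q}"

lemma N_iff: "q \<in> N y \<longleftrightarrow> Gp X y q" unfolding N_def by blast

lemma Ha:
  assumes "Gp X p q" "Gp X p z" "z \<noteq> q"
  shows "sp X q z \<and> \<not> sep p q z"
proof -
  have d: "p \<in> V - X" "q \<in> V - X" "z \<in> V - X" "p \<noteq> q" "p \<noteq> z"
    using assms Gp_dom by blast+
  have "\<not> pr (X \<union> {p,q,z})" using noT d assms(3) by blast
  then have "(nD X p z \<and> nD X q z) \<or> (sp X p z \<and> \<not> sep q p z) \<or> (sp X q z \<and> \<not> sep p q z)"
    using TL[OF Z assms(1) d(3)] d assms(3) by blast
  moreover have "\<not> nD X p z" using PL1[OF Z assms(2)] .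
  moreover have "\<not> sp X p z" using sp_notG[OF Z _ noE[OF d(1)] d(1) d(3)] assms(2) by blast
  ultimately show ?thesis by blast
qed

lemma Hb:
  assumes G: "Gp X p q" and z: "z \<in> V - X" "z \<noteq> p" "z \<noteq> q" and n: "\<not> Gp X p z" "\<not> Gp X q z"
  shows "nD X p z \<and> nD X q z"
proof -
  have d: "p \<in> V - X" "q \<in> V - X" "p \<noteq> q" using G Gp_dom by blast+
  have "\<not> pr (X \<union> {p,q,z})" using noT d z by blast
  then have "(nD X p z \<and> nD X q z) \<or> (sp X p z \<and> \<not> sep q p z) \<or> (sp X q z \<and> \<not> sep p q z)"
    using TL[OF Z G z] by blast
  moreover have "\<not> (sp X p z \<and> \<not> sep q p z)"
  proof
    assume h: "sp X p z \<and> \<not> sep q p z"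
    have "Gp X z q" using twin_G[OF Z G _ _ z(1) z(3) noE[OF z(1)] noE[OF d(2)]] h by blast
    then show False using n(2) Gp_sym by blast
  qed
  moreover have "\<not> (sp X q z \<and> \<not> sep p q z)"
  proof
    assume h: "sp X q z \<and> \<not> sep p q z"
    have "Gp X z p" using twin_G[OF Z Gp_sym[OF G] _ _ z(1) z(2) noE[OF z(1)] noE[OF d(1)]] h by blast
    then show False using n(1) Gp_sym by blast
  qed
  ultimately show ?thesis by blast
qed

lemma cl: "u \<in> V - X \<Longrightarrow> isI X u \<or> (\<exists>\<alpha>. isA X u \<alpha>)"
  using classify[OF Z] noE unfolding isE_def by blast

lemma nDA: "nD X w a \<Longrightarrow> isA X a \<alpha> \<Longrightarrow> \<not> sep w \<alpha> a"
  unfolding nD_def using isI_not_isA[OF Z] isA_unique[OF Z] by blast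

lemma nDI: "nD X a w \<Longrightarrow> isI X w \<Longrightarrow> \<forall>x\<in>X. \<not> sep w a x"
  unfolding nD_def using isI_not_isA[OF Z] by blast

lemma noiso:
  assumes m: "m \<in> V - X" shows "\<exists>q. Gp X m q"
proof (rule ccontr)
  assume iso: "\<not> ?thesis"
  obtain c1 c2 where c: "c1 \<in> X" "c2 \<in> X" "c1 \<noteq> c2" using two_in_big[OF pr_big[OF prX]] by blast
  from cl[OF m] show False
  proof
    assume "\<exists>\<alpha>. isA X m \<alpha>"
    then obtain \<alpha> where Am: "isA X m \<alpha>" by blast
    have aX: "\<alpha> \<in> X" using Am unfolding isA_def by blast
    obtain c where cc: "c \<in> X" "c \<noteq> \<alpha>" using big_third[OF pr_big[OF prX]] by blast
    let ?B = "{t. isA X t \<alpha> \<and> (\<forall>q. \<not> Gp X t q)}"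
    let ?M = "{\<alpha>} \<union> ?B"
    have "md V ?M"
    proof (rule mdI_pivot[where p=\<alpha>])
      fix a w assume a: "a \<in> ?M" and w: "w \<in> V" "w \<notin> ?M"
      show "\<not> sep w \<alpha> a"
      proof (cases "a = \<alpha>")
        case True then show ?thesis using nsep_refl by blast
      next
        case False
        then have aB: "isA X a \<alpha>" "\<forall>q. \<not> Gp X a q" using a by auto
        have aR: "a \<in> V - X" using aB unfolding isA_def by blast
        show ?thesis
        proof (cases "w \<in> X")
          case True then show ?thesis using aB w unfolding isA_def by blast
        next
          case wR: False
          have wa: "w \<noteq> a" using w a by blast
          have "nD X w a"
          proof (cases "\<exists>q. Gp X w q")
            case True
            then obtain q where q: "Gp X w q" by blast
            have "a \<noteq> q" using q aB Gp_sym by blast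
            moreover have "\<not> Gp X w a" "\<not> Gp X q a" using aB Gp_sym by blast+
            ultimately show ?thesis using Hb[OF q aR] wa by blast
          next
            case False
            have "\<not> isA X w \<alpha>" using w False by blast
            then have "\<not> sg X w a" using isI_not_isA[OF Z _ aB(1)] isA_unique[OF Z aB(1)] unfolding sg_def by blast
            moreover have "\<not> Gp X w a" using False by blast
            ultimately show ?thesis using PL3'[OF Z _ aR wa noE noE[OF aR]] w wR by blast
          qed
          then show ?thesis using nDA aB(1) by blast
        qed
      qed
    qed (use aX XV in \<open>auto simp: isA_def\<close>)
    moreover have "\<alpha> \<noteq> m" "c \<notin> ?M" "c \<in> V" using Am cc XV unfolding isA_def by auto
    ultimately show False using not_pr[of V ?M \<alpha> m c] Am iso prV by blast
  next
    assume Im: "isI X m"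
    let ?B = "{t. isI X t \<and> (\<forall>q. \<not> Gp X t q)}"
    let ?M = "V - ?B"
    have "md V ?M"
    proof (rule mdI_pivot[where p=c1])
      fix a w assume a: "a \<in> ?M" and w: "w \<in> V" "w \<notin> ?M"
      then have wB: "isI X w" "\<forall>q. \<not> Gp X w q" by auto
      have wR: "w \<in> V - X" using wB unfolding isI_def by blast
      show "\<not> sep w c1 a"
      proof (cases "a \<in> X")
        case True then show ?thesis using wB c unfolding isI_def by blast
      next
        case False
        then have aR: "a \<in> V - X" using a by blast
        have wa: "w \<noteq> a" using w a by blast
        have "nD X a w"
        proof (cases "\<exists>q. Gp X a q")
          case True
          then obtain q where q: "Gp X a q" by blast
          have "w \<noteq> q" using q wB Gp_sym by blast
          moreover have "\<not> Gp X a w" "\<not> Gp X q w" using wB Gp_sym by blast+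
          ultimately show ?thesis using Hb[OF q wR] wa by blast
        next
          case False2: False
          have "\<not> isI X a" using a False2 by blast
          then have "\<not> sg X a w" using isI_not_isA[OF Z wB(1)] unfolding sg_def by blast
          moreover have "\<not> Gp X a w" using False2 by blast
          ultimately show ?thesis using PL3'[OF Z aR wR wa[symmetric] noE[OF aR] noE[OF wR]] by blast
        qed
        then have "\<not> sep w a c1" using nDI wB(1) c(1) by blast
        then show ?thesis using nsep_sym by blast
      qed
    qed (use c XV in \<open>auto simp: isI_def\<close>)
    moreover have "m \<in> V" "m \<notin> ?M" using Im iso unfolding isI_def by auto
    moreover have "c1 \<in> ?M" "c2 \<in> ?M" using c XV unfolding isI_def by auto
    ultimately show False using not_pr[of V ?M c1 c2 m] c prV by blast
  qed
qed

end


context HS begin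

lemma Gsym: "Gp X a b \<longleftrightarrow> Gp X b a"
  using Gp_sym by blast

lemma Ninj:
  assumes yz: "y \<in> V - X" "z \<in> V - X" "y \<noteq> z" "N y = N z" and q0: "q0 \<in> N y"
  shows False
proof -
  let ?T = "{t \<in> V - X. N t = N y}"
  have "md V ?T"
  proof (rule mdI)
    fix a b u assume a: "a \<in> ?T" and b: "b \<in> ?T" and u: "u \<in> V" "u \<notin> ?T"
    show "\<not> sep u a b"
    proof (cases "a = b")
      case True then show ?thesis using nsep_refl by blast
    next
      case ab: False
      have Na: "N a = N y" and Nb: "N b = N y" and aR: "a \<in> V - X" and bR: "b \<in> V - X" using a b by auto
      have NN: "\<And>q. Gp X a q \<longleftrightarrow> Gp X b q" using Na Nb unfolding N_def by blast
      have "Gp X a q0" "Gp X b q0" using q0 Na Nb unfolding N_def by auto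
      then have qa: "Gp X q0 a" "Gp X q0 b" using Gsym by auto
      have spab: "sp X a b" using Ha[OF qa ab[symmetric]] by blast
      have ua: "u \<noteq> a" "u \<noteq> b" using a b u by auto
      show ?thesis
      proof (cases "u \<in> X")
        case True then show ?thesis using spab unfolding sp_def by blast
      next
        case uR: False
        have uR': "u \<in> V - X" "N u \<noteq> N y" using u uR by auto
        show ?thesis
        proof (cases "Gp X u a")
          case True
          then have "Gp X a u" using Gsym by auto
          then have "Gp X b u" using NN by auto
          then have "Gp X u b" using Gsym by auto
          then show ?thesis using Ha[OF True _ ab[symmetric]] by blast
        next
          case nua: False
          then have "\<not> Gp X a u" using Gsym by auto
          then have "\<not> Gp X b u" using NN by auto
          then have nub: "\<not> Gp X u b" using Gsym by auto
          show ?thesis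
          proof (cases "\<exists>q. Gp X u q \<and> \<not> Gp X a q")
            case True
            then obtain q where q: "Gp X u q" "\<not> Gp X a q" by blast
            have nbq: "\<not> Gp X b q" using q(2) NN by auto
            have "a \<noteq> q" "b \<noteq> q" using q nua nub by auto
            moreover have "\<not> Gp X q a" "\<not> Gp X q b" using q(2) nbq Gsym by auto
            ultimately have "nD X u a" "nD X u b" using Hb[OF q(1) aR] Hb[OF q(1) bR] ua nua nub by auto
            then show ?thesis using nDnD1[OF Z _ _ spab] by blast
          next
            case False
            then have "N u \<subseteq> N a" unfolding N_def by blast
            then obtain q where q: "Gp X a q" "\<not> Gp X u q" using uR'(2) Na unfolding N_def by blast
            have qb: "Gp X b q" using q(1) NN by auto
            have "u \<noteq> q" using q(1) \<open>\<not> Gp X a u\<close> by auto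
            moreover have "\<not> Gp X q u" using q(2) Gsym by auto
            moreover have "\<not> Gp X a u" "\<not> Gp X b u" using nua nub Gsym by auto
            ultimately have "nD X a u" "nD X b u" using Hb[OF q(1) uR'(1)] Hb[OF qb uR'(1)] ua by auto
            then show ?thesis using nDnD2[OF Z _ _ spab] by blast
          qed
        qed
      qed
    qed
  qed blast
  moreover obtain c where "c \<in> X" using big_ne[OF pr_big[OF prX]] by blast
  ultimately show False using not_pr[of V ?T y z c] yz XV prV by blast
qed

definition S' where "S' = {t \<in> V - X. sp X s0 t}"

lemma compar:
  assumes a: "a \<in> S'" and b: "b \<in> S'" and ab: "a \<noteq> b"
  shows "N a \<subseteq> N b \<or> N b \<subseteq> N a"
proof (rule ccontr)
  assume "\<not> ?thesis"
  then obtain q q' where q: "Gp X a q" "\<not> Gp X b q" and q': "Gp X b q'" "\<not> Gp X a q'"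
    unfolding N_def by blast
  have aR: "a \<in> V - X" and bR: "b \<in> V - X" and sa: "sp X s0 a" and sb: "sp X s0 b" using a b unfolding S'_def by auto
  have spab: "sp X a b" using sp_trans[OF sp_sym[OF sa] sb] .
  have nab: "\<not> Gp X a b" using sp_notG[OF Z spab noE[OF aR] aR bR] .
  have nba: "\<not> Gp X b a" using nab Gsym by auto
  have "b \<noteq> q" "a \<noteq> q'" using q q' nab nba by auto
  moreover have "\<not> Gp X q b" "\<not> Gp X q' a" "\<not> Gp X b a" using q q' nab Gsym by auto
  ultimately have "nD X a b" "nD X b a" using Hb[OF q(1) bR] Hb[OF q'(1) aR] ab nab by auto
  then show False using asym[OF aR bR ab sa sb] by blast
qed

lemma N_fin: "finite (N y)"
proof -
  have "N y \<subseteq> V - X" unfolding N_def using Gp_dom by blast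
  then show ?thesis using fin finite_subset by blast
qed

lemma s0S: "s0 \<in> S'" unfolding S'_def using s0 sp_refl by blast

lemma exists_min: "\<exists>s1\<in>S'. \<forall>t\<in>S'. N s1 \<subseteq> N t"
proof -
  define k where "k = (LEAST k. \<exists>t\<in>S'. card (N t) = k)"
  have "\<exists>t\<in>S'. card (N t) = k" unfolding k_def
    using LeastI_ex[of "\<lambda>k. \<exists>t\<in>S'. card (N t) = k"] s0S by blast
  then obtain s1 where s1: "s1 \<in> S'" "card (N s1) = k" by blast
  have "\<forall>t\<in>S'. N s1 \<subseteq> N t"
  proof
    fix t assume t: "t \<in> S'"
    have "k \<le> card (N t)" unfolding k_def using t by (intro Least_le) blast
    show "N s1 \<subseteq> N t"
    proof (cases "t = s1")
      case False
      from compar[OF s1(1) t False[symmetric]] show ?thesis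
      proof
        assume h: "N t \<subseteq> N s1"
        show ?thesis
        proof (rule ccontr)
          assume "\<not> N s1 \<subseteq> N t"
          then have "N t \<subset> N s1" using h by blast
          then have "card (N t) < card (N s1)" using psubset_card_mono N_fin by blast
          then show False using \<open>k \<le> card (N t)\<close> s1(2) by simp
        qed
      qed
    qed simp
  qed
  then show ?thesis using s1 by blast
qed

end


context HS begin

lemma N_of_nbr:
  assumes s1: "s1 \<in> S'" and mn: "\<forall>t\<in>S'. N s1 \<subseteq> N t" and c: "Gp X s1 c"
  shows "N c = S'"
proof
  show "N c \<subseteq> S'"
  proof
    fix t assume "t \<in> N c"
    then have t: "Gp X c t" unfolding N_def by blast
    have c1: "Gp X c s1" using c Gsym by auto
    have tR: "t \<in> V - X" using t Gp_dom by blast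
    show "t \<in> S'"
    proof (cases "t = s1")
      case False
      then have "sp X s1 t" using Ha[OF c1 t] by blast
      then show ?thesis using s1 tR sp_trans unfolding S'_def by blast
    qed (use s1 in simp)
  qed
next
  show "S' \<subseteq> N c"
  proof
    fix t assume t: "t \<in> S'"
    then have "c \<in> N t" using mn c unfolding N_def by blast
    then show "t \<in> N c" using Gsym unfolding N_def by auto
  qed
qed

theorem main_H: "\<exists>v w. v \<in> V - X \<and> w \<in> V - X \<and> v \<noteq> w \<and> pr (V - {v,w})"
proof -
  obtain s1 where s1: "s1 \<in> S'" and mn: "\<forall>t\<in>S'. N s1 \<subseteq> N t" using exists_min by blast
  have s1R: "s1 \<in> V - X" using s1 unfolding S'_def by blast
  obtain c1 where c1: "Gp X s1 c1" using noiso[OF s1R] by blast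
  have c1R: "c1 \<in> V - X" "c1 \<noteq> s1" using c1 Gp_dom by blast+
  have Nc1: "N c1 = S'" using N_of_nbr[OF s1 mn c1] .
  have Ns1: "N s1 = {c1}"
  proof
    show "{c1} \<subseteq> N s1" using c1 unfolding N_def by blast
  next
    show "N s1 \<subseteq> {c1}"
    proof
      fix c assume "c \<in> N s1"
      then have c: "Gp X s1 c" unfolding N_def by blast
      have "N c = N c1" using N_of_nbr[OF s1 mn c] Nc1 by simp
      moreover have "s1 \<in> N c" using c Gsym unfolding N_def by auto
      ultimately show "c \<in> {c1}" using Ninj[of c c1 s1] c Gp_dom c1R by blast
    qed
  qed
  have keyK: False if y: "y \<in> V - X" "y \<noteq> s1" "y \<noteq> c1" and Ny: "N y \<subseteq> {s1,c1}" for y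
  proof -
    obtain q where q: "Gp X y q" using noiso[OF y(1)] by blast
    then have "q \<in> {s1,c1}" using Ny unfolding N_def by blast
    then have "Gp X y c1"
    proof
      assume "q = s1"
      then have "y \<in> N s1" using q Gsym unfolding N_def by auto
      then show ?thesis using Ns1 y by blast
    qed (use q in simp)
    then have "y \<in> N c1" using Gsym unfolding N_def by auto
    then have yS: "y \<in> S'" using Nc1 by simp
    have "sp X s1 y" using s1 yS sp_trans sp_sym unfolding S'_def by blast
    then have "\<not> Gp X y s1" using sp_notG[OF Z _ noE[OF s1R] s1R y(1)] Gsym by auto
    then have "N y = {c1}" using Ny \<open>Gp X y c1\<close> unfolding N_def by blast
    then have "N y = N s1" using Ns1 by simp
    then show False using Ninj[OF y(1) s1R y(2)] Ns1 by blast
  qed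
  let ?W = "V - {s1,c1}"
  have XW: "X \<subseteq> ?W" using XV s1R c1R by blast
  have "pr ?W"
  proof (rule prI)
    show "big ?W" using big_mono[OF pr_big[OF prX] XW] .
  next
    fix M assume M: "md ?W M"
    show "M = {} \<or> M = ?W \<or> (\<exists>x. M = {x})"
    proof (rule ccontr)
      assume nt: "\<not> ?thesis"
      have MW: "M \<subseteq> ?W" using M unfolding md_def by blast
      have "md X (M \<inter> X)" using md_restrict[OF M XW] .
      then have "M \<inter> X = {} \<or> M \<inter> X = X \<or> (\<exists>x. M \<inter> X = {x})" using pr_triv[OF prX] by blast
      then consider (e) "M \<inter> X = {}" | (f) "M \<inter> X = X" | (s) \<alpha> where "M \<inter> X = {\<alpha>}" by auto
      then show False
      proof cases
        case e
        obtain m where m: "m \<in> M" using nt by blast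
        obtain m' where m': "m' \<in> M" "m' \<noteq> m" using nt m by blast
        have out: "\<And>x. x \<in> X \<Longrightarrow> x \<in> ?W \<and> x \<notin> M" using e XW by blast
        have spM: "sp X a b" if "a \<in> M" "b \<in> M" for a b
          unfolding sp_def using mdD[OF M that] out by blast
        have MR: "\<And>a. a \<in> M \<Longrightarrow> a \<in> V - X \<and> a \<noteq> s1 \<and> a \<noteq> c1" using MW e by blast
        have sub: False if a: "a \<in> M" and b: "b \<in> M" and q: "Gp X a q" "\<not> Gp X b q" for a b q
        proof -
          have aR: "a \<in> V - X" "a \<noteq> s1" "a \<noteq> c1" and bR: "b \<in> V - X" using MR a b by auto
          have qR: "q \<in> V - X" using q Gp_dom by blast
          show False
          proof (cases "q \<in> ?W")
            case False
            then consider "q = s1" | "q = c1" using qR by blast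
            then show False
            proof cases
              case 1
              then have "a \<in> N s1" using q Gsym unfolding N_def by auto
              then show False using Ns1 aR by blast
            next
              case 2
              then have "a \<in> S'" using q Gsym Nc1 unfolding N_def by auto
              then have "b \<in> S'" using spM[OF a b] bR sp_trans unfolding S'_def by blast
              then have "Gp X c1 b" using Nc1 unfolding N_def by blast
              then show False using q 2 Gsym by auto
            qed
          next
            case qW: True
            show False
            proof (cases "q \<in> M")
              case True
              then have "sp X q a" using spM a by blast
              then show False using sp_notG[OF Z _ noE[OF qR] qR aR(1)] q Gsym by auto
            next
              case False
              then have "\<not> sep q a b" using mdD[OF M a b qW] by blast
              moreover have "b \<noteq> q" using False b by blast
              ultimately have "Gp X b q" using twin_G[OF Z q(1) spM[OF a b] _ bR _ noE[OF bR] noE[OF qR]] by blast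
              then show False using q by blast
            qed
          qed
        qed
        have "N m \<noteq> N m'"
        proof
          assume "N m = N m'"
          moreover obtain q0 where "Gp X m q0" using noiso MR[OF m] by blast
          ultimately show False using Ninj[of m m' q0] MR m m' unfolding N_def by blast
        qed
        then obtain q where "(Gp X m q \<and> \<not> Gp X m' q) \<or> (Gp X m' q \<and> \<not> Gp X m q)"
          unfolding N_def by blast
        then show False using sub m m' by blast
      next
        case s
        obtain m where m: "m \<in> M" "m \<noteq> \<alpha>" using nt s by blast
        have aX: "\<alpha> \<in> X" "\<alpha> \<in> M" using s by auto
        have MR: "\<And>a. a \<in> M \<Longrightarrow> a \<noteq> \<alpha> \<Longrightarrow> a \<in> V - X \<and> a \<noteq> s1 \<and> a \<noteq> c1" using MW s by blast
        have AM: "isA X a \<alpha>" if "a \<in> M" "a \<noteq> \<alpha>" for a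
          unfolding isA_def using mdD[OF M aX(2) that(1)] MR[OF that] aX s XW by blast
        have mR: "m \<in> V - X" "m \<noteq> s1" "m \<noteq> c1" using MR m by auto
        have "N m \<subseteq> {s1,c1}"
        proof
          fix q assume "q \<in> N m"
          then have q: "Gp X m q" unfolding N_def by blast
          have qR: "q \<in> V - X" using q Gp_dom by blast
          show "q \<in> {s1,c1}"
          proof (rule ccontr)
            assume "q \<notin> {s1,c1}"
            then have qW: "q \<in> ?W" using qR by blast
            show False
            proof (cases "q \<in> M")
              case True
              then have "isA X q \<alpha>" using AM qR aX by blast
              then have "sg X m q" using AM[OF m] unfolding sg_def by blast
              then show False using PL2[OF Z q] by blast
            next
              case False
              then have "\<not> sep q \<alpha> m" using mdD[OF M aX(2) m(1) qW] by blast
              then have "nD X q m" using AM[OF m] unfolding nD_def by blast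
              then show False using PL1[OF Z] q Gsym by blast
            qed
          qed
        qed
        then show False using keyK mR by blast
      next
        case f
        then have XM: "X \<subseteq> M" by blast
        obtain y where y: "y \<in> ?W" "y \<notin> M" using nt MW by blast
        then have yR: "y \<in> V - X" "y \<noteq> s1" "y \<noteq> c1" using XM by auto
        have Iy: "isI X y" unfolding isI_def using mdD[OF M _ _ y(1) y(2)] XM yR by blast
        have "N y \<subseteq> {s1,c1}"
        proof
          fix q assume "q \<in> N y"
          then have q: "Gp X y q" unfolding N_def by blast
          have qR: "q \<in> V - X" using q Gp_dom by blast
          show "q \<in> {s1,c1}"
          proof (rule ccontr)
            assume "q \<notin> {s1,c1}"
            then have qW: "q \<in> ?W" using qR by blast
            show False
            proof (cases "q \<in> M")
              case True
              then have "\<forall>x\<in>X. \<not> sep y q x" using mdD[OF M _ _ y(1) y(2)] XM by blast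
              then have "nD X q y" using Iy unfolding nD_def by blast
              then show False using PL1[OF Z] q Gsym by blast
            next
              case False
              then have "isI X q" unfolding isI_def using mdD[OF M _ _ qW False] XM qR by blast
              then have "sg X y q" using Iy unfolding sg_def by blast
              then show False using PL2[OF Z q] by blast
            qed
          qed
        qed
        then show False using keyK yR by blast
      qed
    qed
  qed
  then show ?thesis using s1R c1R by blast
qed

end


context TS begin

lemma nsep_iff:
  assumes "x \<in> V" "y \<in> V" "v \<in> V" "v \<noteq> x" "v \<noteq> y"
  shows "(((x,v),(y,v)) \<in> E \<and> ((v,x),(v,y)) \<in> E) \<longleftrightarrow> \<not> sep v x y"
proof -
  have d: "(x,v) \<in> dpairs V" "(y,v) \<in> dpairs V" "(v,x) \<in> dpairs V" "(v,y) \<in> dpairs V"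
    using assms unfolding dpairs_def by auto
  show ?thesis unfolding sep_def using K_iff[OF d(1,2)] K_iff[OF d(3,4)] by blast
qed

lemma K_class: "e \<in> dpairs V // E \<Longrightarrow> p \<in> e \<Longrightarrow> e = K p"
  unfolding K_def using eqv
  by (metis Image_singleton_iff equiv_class_eq_iff quotientE)

lemma nDA0: "Z \<subseteq> V \<Longrightarrow> pr Z \<Longrightarrow> nD Z w a \<Longrightarrow> isA Z a \<alpha> \<Longrightarrow> \<not> sep w \<alpha> a"
  unfolding nD_def using isI_not_isA isA_unique by blast

lemma nDI0: "Z \<subseteq> V \<Longrightarrow> pr Z \<Longrightarrow> nD Z a w \<Longrightarrow> isI Z w \<Longrightarrow> \<forall>x\<in>Z. \<not> sep w a x"
  unfolding nD_def using isI_not_isA by blast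

end

lemma E_sub: "is_two_structure \<sigma> \<Longrightarrow> eqv \<sigma> \<subseteq> dpairs (verts \<sigma>) \<times> dpairs (verts \<sigma>)"
  unfolding is_two_structure_def equiv_def refl_on_def by blast

lemma induced_self: "is_two_structure \<sigma> \<Longrightarrow> induced \<sigma> (verts \<sigma>) = \<sigma>"
  using E_sub[of \<sigma>] unfolding induced_def verts_def eqv_def
  by (metis inf.absorb1 prod.collapse)

lemma link_md:
  assumes ts: "is_two_structure \<sigma>" and W: "W \<subseteq> verts \<sigma>"
  shows "is_module (induced \<sigma> W) M \<longleftrightarrow> TS.md (eqv \<sigma>) W M"
proof -
  interpret TS "verts \<sigma>" "eqv \<sigma>" using ts unfolding is_two_structure_def by unfold_locales
  have vi: "verts (induced \<sigma> W) = W" "eqv (induced \<sigma> W) = eqv \<sigma> \<inter> (dpairs W \<times> dpairs W)"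
    unfolding induced_def verts_def eqv_def by auto
  show ?thesis
  proof
    assume h: "is_module (induced \<sigma> W) M"
    show "md W M" unfolding md_def
    proof (intro conjI ballI)
      show "M \<subseteq> W" using h vi unfolding is_module_def by auto
      fix a b u assume a: "a \<in> M" "b \<in> M" "u \<in> W - M"
      then have "((a,u),(b,u)) \<in> eqv \<sigma> \<and> ((u,a),(u,b)) \<in> eqv \<sigma>" using h vi unfolding is_module_def by auto
      moreover have "a \<in> verts \<sigma>" "b \<in> verts \<sigma>" "u \<in> verts \<sigma>" "u \<noteq> a" "u \<noteq> b"
        using a W \<open>M \<subseteq> W\<close> by auto
      ultimately show "\<not> sep u a b" using nsep_iff by blast
    qed
  next
    assume h: "md W M"
    have MW: "M \<subseteq> W" using h unfolding md_def by blast
    show "is_module (induced \<sigma> W) M" unfolding is_module_def vi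
    proof (intro conjI ballI)
      show "M \<subseteq> W" using MW .
      fix x y v assume a: "x \<in> M" "y \<in> M" "v \<in> W - M"
      have ns: "\<not> sep v x y" using h a unfolding md_def by blast
      have in_: "x \<in> verts \<sigma>" "y \<in> verts \<sigma>" "v \<in> verts \<sigma>" "v \<noteq> x" "v \<noteq> y" using a W MW by auto
      have E: "((x,v),(y,v)) \<in> eqv \<sigma>" "((v,x),(v,y)) \<in> eqv \<sigma>" using nsep_iff[OF in_] ns by auto
      have dp: "(x,v) \<in> dpairs W" "(y,v) \<in> dpairs W" "(v,x) \<in> dpairs W" "(v,y) \<in> dpairs W"
        using a MW unfolding dpairs_def by auto
      show "((x, v), y, v) \<in> eqv \<sigma> \<inter> dpairs W \<times> dpairs W" using E dp by blast
      show "((v, x), v, y) \<in> eqv \<sigma> \<inter> dpairs W \<times> dpairs W" using E dp by blast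
    qed
  qed
qed

lemma link_pr:
  assumes ts: "is_two_structure \<sigma>" and W: "W \<subseteq> verts \<sigma>"
  shows "prime_ts (induced \<sigma> W) \<longleftrightarrow> TS.pr (eqv \<sigma>) W"
proof -
  interpret TS "verts \<sigma>" "eqv \<sigma>" using ts unfolding is_two_structure_def by unfold_locales
  have vi: "verts (induced \<sigma> W) = W" unfolding induced_def verts_def by auto
  show ?thesis unfolding prime_ts_def pr_def big_def trivial_module_def vi link_md[OF ts W] by blast
qed

theorem theoremB1:
  fixes \<sigma> :: "'a two_structure" and X :: "'a set"
  assumes "is_two_structure \<sigma>"
    and "prime_ts \<sigma>"
    and "X \<subset> verts \<sigma>"
    and "prime_ts (induced \<sigma> X)"
    and "qa \<sigma> X \<noteq> {}"
    and "finite (verts \<sigma> - X)"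
    and "4 \<le> card (verts \<sigma> - X)"
  shows "\<exists>v w. v \<in> verts \<sigma> - X \<and> w \<in> verts \<sigma> - X \<and> v \<noteq> w \<and>
           prime_ts (remove \<sigma> {v, w})"
proof -
  note ts = assms(1)
  interpret TS "verts \<sigma>" "eqv \<sigma>" using ts unfolding is_two_structure_def by unfold_locales
  let ?V = "verts \<sigma>"
  have XV: "X \<subseteq> ?V" using assms(3) by blast
  have prV: "pr ?V" using assms(2) link_pr[OF ts order_refl] induced_self[OF ts] by simp
  have prX: "pr X" using assms(4) link_pr[OF ts XV] by simp
  have fin: "finite (?V - X)" using assms(6) .
  have concl: "\<exists>v w. v \<in> ?V - X \<and> w \<in> ?V - X \<and> v \<noteq> w \<and> prime_ts (remove \<sigma> {v, w})"
    if "\<exists>v w. v \<in> ?V - X \<and> w \<in> ?V - X \<and> v \<noteq> w \<and> pr (?V - {v, w})"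
    using that link_pr[OF ts, of "?V - {_,_}"] unfolding remove_def by blast
  obtain S e f where S: "S \<noteq> {}" "e \<in> classes \<sigma>" "f \<in> classes \<sigma>" "e \<noteq> f"
    "S = ext_set_ef \<sigma> X e f \<or> (\<exists>\<alpha>\<in>X. S = ext_alpha_ef \<sigma> X \<alpha> e f)"
    using assms(5) unfolding qa_def by blast
  obtain s0 where s0S: "s0 \<in> S" using S(1) by blast
  have ef: "e \<in> dpairs ?V // eqv \<sigma>" "f \<in> dpairs ?V // eqv \<sigma>" using S(2,3) unfolding classes_def by auto
  have s0R: "s0 \<in> ?V - X"
    using S(5) s0S unfolding ext_set_ef_def ext_alpha_ef_def ext_set_def ext_alpha_def by blast
  have Xs0: "X \<union> {s0} \<subseteq> ?V" using XV s0R by blast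
  have asym: False if ab: "a \<in> ?V - X" "b \<in> ?V - X" "a \<noteq> b" and sa: "sp X s0 a" and sb: "sp X s0 b"
    and nab: "nD X a b" and nba: "nD X b a" for a b
  proof -
    from S(5) show False
    proof
      assume "S = ext_set_ef \<sigma> X e f"
      then have s0I: "s0 \<in> ext_set \<sigma> X" and cls: "\<forall>\<alpha>\<in>X. (s0,\<alpha>) \<in> e \<and> (\<alpha>,s0) \<in> f"
        using s0S unfolding ext_set_ef_def by auto
      have "is_module (induced \<sigma> (X \<union> {s0})) X" using s0I unfolding ext_set_def by blast
      then have "md (X \<union> {s0}) X" using link_md[OF ts Xs0] by blast
      then have Is0: "isI X s0" unfolding isI_def using s0R mdD by blast
      have Ia: "isI X a" "isI X b" using sp_isI[OF sa Is0 ab(1)] sp_isI[OF sb Is0 ab(2)] by auto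
      obtain x0 where x0: "x0 \<in> X" using big_ne[OF pr_big[OF prX]] by blast
      have h1: "\<not> sep b a x0" using nDI0[OF XV prX nab Ia(2)] x0 by blast
      have h2: "\<not> sep a b x0" using nDI0[OF XV prX nba Ia(1)] x0 by blast
      have h3: "\<not> sep x0 s0 a" "\<not> sep x0 s0 b" using sa sb x0 unfolding sp_def by auto
      have "K (s0,x0) = K (x0,s0)" using h1 h2 h3 unfolding sep_def by metis
      moreover have "e = K (s0,x0)" "f = K (x0,s0)" using K_class ef cls x0 by auto
      ultimately show False using S(4) by simp
    next
      assume "\<exists>\<alpha>\<in>X. S = ext_alpha_ef \<sigma> X \<alpha> e f"
      then obtain \<alpha> where aX: "\<alpha> \<in> X" and SS: "S = ext_alpha_ef \<sigma> X \<alpha> e f" by blast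
      then have s0A: "s0 \<in> ext_alpha \<sigma> X \<alpha>" and cls: "(s0,\<alpha>) \<in> e" "(\<alpha>,s0) \<in> f"
        using s0S unfolding ext_alpha_ef_def by auto
      have "is_module (induced \<sigma> (X \<union> {s0})) {\<alpha>,s0}" using s0A unfolding ext_alpha_def by blast
      then have md0: "md (X \<union> {s0}) {\<alpha>,s0}" using link_md[OF ts Xs0] by blast
      have As0: "isA X s0 \<alpha>" unfolding isA_def
      proof (intro conjI ballI)
        fix x assume "x \<in> X - {\<alpha>}"
        then show "\<not> sep x \<alpha> s0" using mdD[OF md0, of \<alpha> s0 x] s0R by blast
      qed (use s0R aX in auto)
      have Aa: "isA X a \<alpha>" "isA X b \<alpha>" using sp_isA[OF sa As0 ab(1)] sp_isA[OF sb As0 ab(2)] by auto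
      have h1: "\<not> sep a \<alpha> b" using nDA0[OF XV prX nab Aa(2)] .
      have h2: "\<not> sep b \<alpha> a" using nDA0[OF XV prX nba Aa(1)] .
      have h3: "\<not> sep \<alpha> s0 a" "\<not> sep \<alpha> s0 b" using sa sb aX unfolding sp_def by auto
      have "K (s0,\<alpha>) = K (\<alpha>,s0)" using h1 h2 h3 unfolding sep_def by metis
      moreover have "e = K (s0,\<alpha>)" "f = K (\<alpha>,s0)" using K_class ef cls by auto
      ultimately show False using S(4) by simp
    qed
  qed
  let ?r = "card (?V - X)"
  show ?thesis
  proof (cases "even ?r")
    case True
    then show ?thesis using chain[OF prV XV prX fin refl True] assms(7) concl by auto
  next
    case odd: False
    show ?thesis
    proof (cases "\<exists>z\<in>?V - X. pr (X \<union> {z})")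
      case True
      then obtain z where z: "z \<in> ?V - X" "pr (X \<union> {z})" by blast
      have eq: "?V - (X \<union> {z}) = (?V - X) - {z}" by blast
      have c: "card (?V - (X \<union> {z})) = ?r - 1" unfolding eq using z fin by simp
      have "\<exists>v w. v \<in> ?V - (X \<union> {z}) \<and> w \<in> ?V - (X \<union> {z}) \<and> v \<noteq> w \<and> pr (?V - {v, w})"
        using chain[OF prV _ z(2) _ c] z XV fin odd assms(7) by auto
      then show ?thesis using concl by blast
    next
      case noE: False
      show ?thesis
      proof (cases "\<exists>p q z. p \<in> ?V - X \<and> q \<in> ?V - X \<and> z \<in> ?V - X \<and> p \<noteq> q \<and> p \<noteq> z \<and> q \<noteq> z \<and> pr (X \<union> {p,q,z})")
        case True
        then obtain p q z where pqz: "p \<in> ?V - X" "q \<in> ?V - X" "z \<in> ?V - X" "p \<noteq> q" "p \<noteq> z" "q \<noteq> z"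
          "pr (X \<union> {p,q,z})" by blast
        have eq: "?V - (X \<union> {p,q,z}) = (?V - X) - {p,q,z}" by blast
        have c: "card (?V - (X \<union> {p,q,z})) = ?r - 3" unfolding eq using pqz fin
          by (subst card_Diff_subset) auto
        have "\<exists>v w. v \<in> ?V - (X \<union> {p,q,z}) \<and> w \<in> ?V - (X \<union> {p,q,z}) \<and> v \<noteq> w \<and> pr (?V - {v, w})"
        proof -
          have "2 \<le> ?r - 3" "even (?r - 3)" using odd assms(7) by presburger+
          then show ?thesis using chain[OF prV _ pqz(7) _ c] pqz XV fin by auto
        qed
        then show ?thesis using concl by blast
      next
        case noT: False
        interpret HS "?V" "eqv \<sigma>" X s0
        proof
          show "X \<subseteq> ?V" using XV .
          show "pr X" using prX .
          show "pr ?V" using prV .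
          show "finite (?V - X)" using fin .
          show "\<And>u. u \<in> ?V - X \<Longrightarrow> \<not> isE X u" using noE unfolding isE_def by blast
          show "\<And>p q z. p \<in> ?V - X \<Longrightarrow> q \<in> ?V - X \<Longrightarrow> z \<in> ?V - X \<Longrightarrow> p \<noteq> q \<Longrightarrow> p \<noteq> z \<Longrightarrow> q \<noteq> z
               \<Longrightarrow> \<not> pr (X \<union> {p,q,z})" using noT by blast
          show "s0 \<in> ?V - X" using s0R .
          show "\<And>a b. a \<in> ?V - X \<Longrightarrow> b \<in> ?V - X \<Longrightarrow> a \<noteq> b \<Longrightarrow> sp X s0 a \<Longrightarrow> sp X s0 b
               \<Longrightarrow> nD X a b \<Longrightarrow> nD X b a \<Longrightarrow> False" using asym by blast
        qed
        show ?thesis using main_H concl by blast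
      qed
    qed
  qed
qed


end
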